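(* Let $i\ge 3$ and $k\ge 3$ be integers. Then: (a) $g_1(L_i,L_{i+2},L_{i+k})=(2L_i-1)L_{i+2}-L_i$ whenever $k\ge i+4$; (b) $g_1(L_i,L_{i+2},L_{2i+3})=(F_{i+3}-1)L_{i+2}-L_i$; (c) $g_1(L_i,L_{i+2},L_{2i+2})=(3F_{i-1}-1)L_{i+2}+L_{2i+2}-L_i$; (d) if $r=\lfloor (L_i-1)/F_k\rfloor\ge 1$ (equivalently $k\le i+1$), then $$g_1(L_i,L_{i+2},L_{i+k})=\begin{cases}(L_i-rF_k-1)L_{i+2}+(r+1)L_{i+k}-L_i & \text{if } (L_i-rF_k)L_{i+2}\ge F_{k-2}L_i,\\ (F_k-1)L_{i+2}+rL_{i+k}-L_i & \text{if } (L_i-rF_k)L_{i+2}< F_{k-2}L_i.\end{cases}$$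
   Context: Fibonacci numbers: $F_0=0$, $F_1=1$, $F_n=F_{n-1}+F_{n-2}$. Lucas numbers: $L_0=2$, $L_1=1$, $L_n=L_{n-1}+L_{n-2}$. For positive integers $a_1,\dots,a_l$ with $\gcd(a_1,\dots,a_l)=1$ and an integer $n$, let $d(n;a_1,\dots,a_l)$ be the number of tuples $(x_1,\dots,x_l)$ of nonnegative integers with $a_1x_1+\dots+a_lx_l=n$. For a nonnegative integer $p$, the $p$-Frobenius number $g_p(a_1,\dots,a_l)$ is the largest integer $n$ with $d(n;a_1,\dots,a_l)\le p$. *)

theory Defs
  imports "HOL-Number_Theory.Fib"
begin

fun lucas :: "nat \<Rightarrow> nat" where
  "lucas 0 = 2"
| "lucas (Suc 0) = 1"
| "lucas (Suc (Suc n)) = lucas (Suc n) + lucas n"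

definition num_reps :: "int \<Rightarrow> nat list \<Rightarrow> nat" where
  "num_reps n as = card {xs :: nat list. length xs = length as \<and>
      int (\<Sum>j<length as. as ! j * xs ! j) = n}"

definition frob_p :: "nat \<Rightarrow> nat list \<Rightarrow> int" where
  "frob_p p as = (GREATEST n :: int. num_reps n as \<le> p)"

end

theory Submission
  imports Defs
begin

lemma sum3: "(\<Sum>j<length [a,b,c::nat]. [a,b,c] ! j * [x,y,z] ! j) = a*x+b*y+c*z"
  by (simp add: lessThan_Suc numeral_3_eq_3)

lemma len3: "length xs = 3 \<Longrightarrow> xs = [xs!0, xs!1, xs!2]"
  by (cases xs; cases "tl xs"; cases "tl (tl xs)"; auto)

lemma reps_finite:
  assumes "a>0" "b>0" "c>0"
  shows "finite {xs :: nat list. length xs = length [a,b,c] \<and>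
      int (\<Sum>j<length [a,b,c]. [a,b,c] ! j * xs ! j) = n}" (is "finite ?S")
proof -
  have "?S \<subseteq> {xs. set xs \<subseteq> {..nat n} \<and> length xs = 3}"
  proof
    fix xs assume "xs \<in> ?S"
    then have l: "length xs = 3" and e: "int (\<Sum>j<length [a,b,c]. [a,b,c] ! j * xs ! j) = n" by auto
    have xs: "xs = [xs!0, xs!1, xs!2]" using len3[OF l] .
    have "int (a * xs!0 + b * xs!1 + c * xs!2) = n" using e sum3[of a b c "xs!0" "xs!1" "xs!2"] xs by metis
    moreover have "xs!0 \<le> a * xs!0" "xs!1 \<le> b*xs!1" "xs!2 \<le> c*xs!2" using assms by auto
    ultimately have "xs!0 \<le> nat n" "xs!1 \<le> nat n" "xs!2 \<le> nat n" by linarith+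
    then have "set [xs!0, xs!1, xs!2] \<subseteq> {..nat n}" by auto
    then show "xs \<in> {xs. set xs \<subseteq> {..nat n} \<and> length xs = 3}" using xs l by (metis (mono_tags, lifting) mem_Collect_eq)
  qed
  moreover have "finite {xs. set xs \<subseteq> {..nat n} \<and> length xs = 3}"
    by (rule finite_lists_length_eq) simp
  ultimately show ?thesis by (rule finite_subset)
qed

lemma two_reps:
  assumes "a>0" "b>0" "c>0"
    and "int(a*x1 + b*y1 + c*z1) = n" "int(a*x2+b*y2+c*z2) = n" "(x1,y1,z1) \<noteq> (x2,y2,z2)"
  shows "num_reps n [a,b,c] \<ge> 2"
proof -
  let ?S = "{xs :: nat list. length xs = length [a,b,c] \<and>
      int (\<Sum>j<length [a,b,c]. [a,b,c] ! j * xs ! j) = n}"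
  have m1: "[x1,y1,z1] \<in> ?S" unfolding mem_Collect_eq sum3 using assms(4) by simp
  have m2: "[x2,y2,z2] \<in> ?S" unfolding mem_Collect_eq sum3 using assms(5) by simp
  have ne: "[x1,y1,z1] \<noteq> [x2,y2,z2]" using assms(6) by simp
  have "card {[x1,y1,z1],[x2,y2,z2]} = 2" using ne by simp
  moreover have "card {[x1,y1,z1],[x2,y2,z2]} \<le> card ?S"
    by (rule card_mono[OF reps_finite[OF assms(1-3)]]) (use m1 m2 in blast)
  ultimately show ?thesis unfolding num_reps_def by linarith
qed
lemma one_rep:
  assumes "\<And>x y z. int(a*x + b*y + c*z) = n \<Longrightarrow> (x,y,z) = (x0,y0,z0)"
  shows "num_reps n [a,b,c] \<le> 1"
proof -
  let ?S = "{xs :: nat list. length xs = length [a,b,c] \<and>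
      int (\<Sum>j<length [a,b,c]. [a,b,c] ! j * xs ! j) = n}"
  have "?S \<subseteq> {[x0,y0,z0]}"
  proof
    fix xs assume "xs \<in> ?S"
    then have l: "length xs = 3" and e: "int (\<Sum>j<length [a,b,c]. [a,b,c] ! j * xs ! j) = n" by auto
    have xs: "xs = [xs!0, xs!1, xs!2]" using len3[OF l] .
    have "int (a * xs!0 + b * xs!1 + c * xs!2) = n" using e sum3[of a b c "xs!0" "xs!1" "xs!2"] xs by metis
    then have "(xs!0, xs!1, xs!2) = (x0,y0,z0)" by (rule assms)
    then show "xs \<in> {[x0,y0,z0]}" using xs by simp
  qed
  then have "card ?S \<le> card {[x0,y0,z0]}" by (intro card_mono) auto
  then show ?thesis unfolding num_reps_def by simp
qed

lemma frob_eq: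
  assumes "num_reps G as \<le> 1" "\<And>n. n > G \<Longrightarrow> num_reps n as \<ge> 2"
  shows "frob_p 1 as = G"
  unfolding frob_p_def
proof (rule Greatest_equality)
  show "num_reps G as \<le> 1" by fact
  fix y assume "num_reps y as \<le> 1"
  then show "y \<le> G" using assms(2)[of y] by force
qed

lemma class_exists:
  fixes a b n :: int
  assumes "a > 0" "coprime a b"
  shows "\<exists>w. 0 \<le> w \<and> w < a \<and> a dvd (n - w*b)"
proof -
  obtain u v where uv: "u*a + v*b = gcd a b" using bezout_int by blast
  then have uv1: "u*a + v*b = 1" using assms(2) by simp
  define w where "w = (n*v) mod a"
  have w': "w = n*v - (n*v div a)*a" unfolding w_def by (simp add: minus_div_mult_eq_mod)
  have "n - w*b = n*(u*a+v*b) - w*b" using uv1 by simp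
  also have "\<dots> = a*(n*u + (n*v div a)*b)" unfolding w' by (simp add: algebra_simps)
  finally have "a dvd (n - w*b)" by simp
  moreover have "0 \<le> w" "w < a" unfolding w_def using assms(1) by auto
  ultimately show ?thesis by blast
qed

lemma pos_mult_gt_neg:
  fixes a t :: int
  assumes "a > 0" "a*t > -a"
  shows "t \<ge> 0"
proof (rule ccontr)
  assume "\<not> t \<ge> 0"
  then have "t \<le> -1" by simp
  then have "a*t \<le> a*(-1)" using assms(1) by (intro mult_left_mono) auto
  then show False using assms(2) by simp
qed

lemma fill:
  fixes a n V :: int
  assumes "a > 0" "a dvd (n - V)" "V < n + a"
  shows "\<exists>x\<ge>0. n = x*a + V"
proof -
  obtain q where q: "n - V = a*q" using assms(2) by blast
  have "a*q > -a" using q assms(3) by linarith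
  then have "q \<ge> 0" using pos_mult_gt_neg assms(1) by blast
  then show ?thesis using q by (intro exI[of _ q]) (auto simp: algebra_simps)
qed

lemma core_two:
  fixes a b c e f M n :: int
  assumes a: "a>0" and cdef: "c = f*b - e*a" and cop: "coprime a b"
  and H: "\<And>w. 0 \<le> w \<Longrightarrow> w < a \<Longrightarrow> \<exists>y1 z1 y2 z2. 0\<le>y1 \<and> 0\<le>z1 \<and> 0\<le>y2 \<and> 0\<le>z2 \<and> (y1,z1) \<noteq> (y2,z2)
      \<and> a dvd (y1 + z1*f - w) \<and> a dvd (y2 + z2*f - w) \<and> y1*b+z1*c \<le> M \<and> y2*b+z2*c \<le> M"
  and n: "n > M - a"
  shows "\<exists>x1 y1 z1 x2 y2 z2. 0\<le>x1 \<and> 0\<le>y1 \<and> 0\<le>z1 \<and> 0\<le>x2 \<and> 0\<le>y2 \<and> 0\<le>z2 \<and>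
     n = x1*a + y1*b + z1*c \<and> n = x2*a + y2*b + z2*c \<and> (y1,z1) \<noteq> (y2,z2)"
proof -
  obtain w where w: "0 \<le> w" "w < a" "a dvd (n - w*b)" using class_exists[OF a cop] by blast
  obtain y1 z1 y2 z2 where yz: "0\<le>y1" "0\<le>z1" "0\<le>y2" "0\<le>z2" "(y1,z1) \<noteq> (y2,z2)"
      "a dvd (y1 + z1*f - w)" "a dvd (y2 + z2*f - w)" "y1*b+z1*c \<le> M" "y2*b+z2*c \<le> M"
    using H[OF w(1,2)] by blast
  have key: "a dvd (n - (y*b + z*c))" if "a dvd (y + z*f - w)" for y z
  proof -
    have eq: "n - (y*b + z*c) = (n - w*b) - (y + z*f - w)*b + (z*e)*a" unfolding cdef by (simp add: algebra_simps)
    have d2: "a dvd (y + z*f - w)*b" using that by simp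
    have d3: "a dvd (z*e)*a" by simp
    show ?thesis unfolding eq by (rule dvd_add[OF dvd_diff[OF w(3) d2] d3])
  qed
  obtain x1 where x1: "x1 \<ge> 0" "n = x1*a + (y1*b + z1*c)" using fill[OF a key[OF yz(6)]] yz(8) n by auto
  obtain x2 where x2: "x2 \<ge> 0" "n = x2*a + (y2*b + z2*c)" using fill[OF a key[OF yz(7)]] yz(9) n by auto
  have e1: "n = x1*a + y1*b + z1*c" using x1(2) by (simp add: add.assoc)
  have e2: "n = x2*a + y2*b + z2*c" using x2(2) by (simp add: add.assoc)
  show ?thesis using x1(1) x2(1) yz(1-5) e1 e2 by blast
qed

lemma core_one:
  fixes a b c e f G w0 x y z :: int
  assumes a: "a>0" and f: "f \<ge> 0" and cdef: "c = f*b - e*a" and cop: "coprime a b"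
  and w0: "0 \<le> w0" "w0 < a" "a dvd (G - w0*b)"
  and H: "\<And>t y z. 0\<le>t \<Longrightarrow> 0\<le>y \<Longrightarrow> 0\<le>z \<Longrightarrow> y + z*f = w0 + t*a \<Longrightarrow> y*b + z*c \<le> G \<Longrightarrow> y = w0 \<and> z = 0"
  and xyz: "0\<le>x" "0\<le>y" "0\<le>z" "x*a + y*b + z*c = G"
  shows "x = (G - w0*b) div a \<and> y = w0 \<and> z = 0"
proof -
  define s where "s = y + z*f"
  have "G - s*b = x*a - (z*e)*a" using xyz(4) cdef unfolding s_def by (simp add: algebra_simps)
  then have d1: "a dvd (G - s*b)" by simp
  have e: "(G - w0*b) - (G - s*b) = (s - w0)*b" by (simp add: algebra_simps)
  have "a dvd ((G - w0*b) - (G - s*b))" by (rule dvd_diff[OF w0(3) d1])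
  then have "a dvd ((s - w0)*b)" unfolding e .
  then have "a dvd (s - w0)" using cop by (simp add: coprime_dvd_mult_left_iff)
  then obtain t where t: "s - w0 = a*t" by blast
  have "z*f \<ge> 0" using xyz(3) f by simp
  then have "s \<ge> 0" unfolding s_def using xyz(2) by linarith
  then have "a*t > -a" using t w0 by linarith
  then have "t \<ge> 0" using pos_mult_gt_neg a by blast
  have "x*a \<ge> 0" using xyz(1) a by simp
  then have "y*b + z*c \<le> G" using xyz(4) by linarith
  moreover have "y + z*f = w0 + t*a" using t unfolding s_def by (simp add: algebra_simps)
  ultimately have yz: "y = w0 \<and> z = 0" using H[OF \<open>t\<ge>0\<close> xyz(2,3)] by blast
  then have xa: "x*a = G - w0*b" using xyz(4) by simp
  have "(G - w0*b) div a = x" unfolding xa[symmetric] using a by simp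
  then show ?thesis using yz by simp
qed

lemma frob_core:
  fixes na nb nc :: nat and a b c e f M ww :: int
  assumes abc: "a = int na" "b = int nb" "c = int nc" and pos: "na > 0" "nb > 0" "nc > 0"
  and f: "f \<ge> 0" and cdef: "c = f*b - e*a" and cop: "coprime a b"
  and H2: "\<And>w. 0 \<le> w \<Longrightarrow> w < a \<Longrightarrow> \<exists>y1 z1 y2 z2. 0\<le>y1 \<and> 0\<le>z1 \<and> 0\<le>y2 \<and> 0\<le>z2 \<and> (y1,z1) \<noteq> (y2,z2)
      \<and> a dvd (y1 + z1*f - w) \<and> a dvd (y2 + z2*f - w) \<and> y1*b+z1*c \<le> M \<and> y2*b+z2*c \<le> M"
  and ww: "0 \<le> ww" "ww < a" "a dvd (M - a - ww*b)"
  and H1: "\<And>t y z. 0\<le>t \<Longrightarrow> 0\<le>y \<Longrightarrow> 0\<le>z \<Longrightarrow> y + z*f = ww + t*a \<Longrightarrow> y*b + z*c \<le> M - a \<Longrightarrow> y = ww \<and> z = 0"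
  shows "frob_p 1 [na,nb,nc] = M - a"
proof (rule frob_eq)
  have apos: "a > 0" using abc pos by simp
  show "num_reps (M - a) [na, nb, nc] \<le> 1"
  proof (rule one_rep)
    fix x y z :: nat
    assume "int (na * x + nb * y + nc * z) = M - a"
    then have "int x * a + int y * b + int z * c = M - a" using abc by (simp add: algebra_simps)
    then have "int x = (M - a - ww*b) div a \<and> int y = ww \<and> int z = 0"
      using core_one[where x="int x" and y="int y" and z="int z", OF apos f cdef cop ww H1] by auto
    then show "(x, y, z) = (nat ((M - a - ww*b) div a), nat ww, 0)" by auto
  qed
next
  fix n assume n: "M - a < n"
  have apos: "a > 0" using abc pos by simp
  obtain x1 y1 z1 x2 y2 z2 where h: "0\<le>x1" "0\<le>y1" "0\<le>z1" "0\<le>x2" "0\<le>y2" "0\<le>z2"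
     "n = x1*a + y1*b + z1*c" "n = x2*a + y2*b + z2*c" "(y1,z1) \<noteq> (y2,z2)"
    using core_two[OF apos cdef cop H2 n] by blast
  have r1: "int (na * nat x1 + nb * nat y1 + nc * nat z1) = n" using h abc by (simp add: algebra_simps)
  have r2: "int (na * nat x2 + nb * nat y2 + nc * nat z2) = n" using h abc by (simp add: algebra_simps)
  have "(nat x1, nat y1, nat z1) \<noteq> (nat x2, nat y2, nat z2)" using h(1-6,9) by (auto simp: nat_eq_iff2)
  then show "2 \<le> num_reps n [na, nb, nc]" by (rule two_reps[OF pos r1 r2])
qed

lemma H2_intro:
  fixes yA zA yB zB a b c f w M :: int
  assumes "0\<le>yA" "0\<le>zA" "0\<le>yB" "0\<le>zB" "(yA,zA) \<noteq> (yB,zB)"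
    "a dvd (yA + zA*f - w)" "a dvd (yB + zB*f - w)" "yA*b+zA*c \<le> M" "yB*b+zB*c \<le> M"
  shows "\<exists>y1 z1 y2 z2. 0\<le>y1 \<and> 0\<le>z1 \<and> 0\<le>y2 \<and> 0\<le>z2 \<and> (y1,z1) \<noteq> (y2,z2)
      \<and> a dvd (y1 + z1*f - w) \<and> a dvd (y2 + z2*f - w) \<and> y1*b+z1*c \<le> M \<and> y2*b+z2*c \<le> M"
  using assms by blast

lemma caseA:
  fixes na nb nc :: nat and a b c e f :: int
  assumes abc: "a = int na" "b = int nb" "c = int nc" and pos: "na > 0" "nb > 0" "nc > 0"
  and e: "e \<ge> 0" and f: "f \<ge> 2*a" and cdef: "c = f*b - e*a" and cop: "coprime a b"
  and ec: "e*(2*a-1) \<le> c"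
  shows "frob_p 1 [na,nb,nc] = (2*a-1)*b - a"
proof (rule frob_core[OF abc pos _ cdef cop, where ww = "a - 1"])
  have a: "a > 0" and b: "b > 0" and c: "c > 0" using abc pos by auto
  show "f \<ge> 0" using f a by simp
  show "0 \<le> a - 1" "a - 1 < a" using a by auto
  show "a dvd ((2*a-1)*b - a - (a-1)*b)"
  proof -
    have "(2*a-1)*b - a - (a-1)*b = a*(b-1)" by (simp add: algebra_simps)
    then show ?thesis by simp
  qed
  fix w :: int assume w: "0 \<le> w" "w < a"
  show "\<exists>y1 z1 y2 z2. 0\<le>y1 \<and> 0\<le>z1 \<and> 0\<le>y2 \<and> 0\<le>z2 \<and> (y1,z1) \<noteq> (y2,z2)
      \<and> a dvd (y1 + z1*f - w) \<and> a dvd (y2 + z2*f - w) \<and> y1*b+z1*c \<le> (2*a-1)*b \<and> y2*b+z2*c \<le> (2*a-1)*b"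
  proof (rule H2_intro[where yA=w and zA=0 and yB="w+a" and zB=0])
    show "w*b + 0*c \<le> (2*a-1)*b" using mult_right_mono[of w "2*a-1" b] w b by simp
    show "(w+a)*b + 0*c \<le> (2*a-1)*b" using mult_right_mono[of "w+a" "2*a-1" b] w b by simp
  qed (use w a in auto)
next
  have a: "a > 0" and b: "b > 0" and c: "c > 0" using abc pos by auto
  fix t y z :: int
  assume t: "0 \<le> t" and y: "0 \<le> y" and z: "0 \<le> z" and s: "y + z*f = a - 1 + t*a"
    and V: "y*b + z*c \<le> (2*a-1)*b - a"
  show "y = a - 1 \<and> z = 0"
  proof -
    have yv: "y = a - 1 + t*a - z*f" using s by simp
    have Veq: "y*b + z*c = (a - 1 + t*a)*b - z*e*a" unfolding yv cdef by (simp add: algebra_simps)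
    have "a*((t-1)*b + 1) \<le> a*(z*e)" using V Veq by (simp add: algebra_simps)
    then have key2: "(t-1)*b + 1 \<le> z*e" using a by simp
    show ?thesis
    proof (cases "z = 0")
      case True
      have "t < 1"
      proof (rule ccontr)
        assume "\<not> t < 1"
        then have "(t-1)*b \<ge> 0" using b by simp
        then show False using key2 True by simp
      qed
      then show ?thesis using True t yv by simp
    next
      case False
      then have z1: "z \<ge> 1" using z by simp
      have zf: "z*f \<le> a - 1 + t*a" using y yv by simp
      have fz: "1*f \<le> z*f" using z1 f a by (intro mult_right_mono) auto
      show ?thesis
      proof (cases "t \<le> 1")
        case True
        then have "t*a \<le> 1*a" using a by (intro mult_right_mono) auto
        then show ?thesis using zf fz f by simp
      next
        case False
        have h1: "f*((t-1)*b+1) \<le> f*(z*e)" using key2 f a by (intro mult_left_mono) auto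
        have h2: "e*(z*f) \<le> e*(a-1+t*a)" using zf e by (intro mult_left_mono) auto
        have h3: "c \<le> (t-1)*c" using mult_right_mono[of 1 "t-1" c] False c by simp
        have q1: "f*((t-1)*b+1) = (t-1)*c + (t-1)*(e*a) + f" unfolding cdef by (simp add: algebra_simps)
        have q2: "f*(z*e) = e*(z*f)" by (simp add: algebra_simps)
        have q3: "e*(a-1+t*a) = e*a - e + t*(e*a)" by (simp add: algebra_simps)
        have q4: "(t-1)*(e*a) = t*(e*a) - e*a" by (simp add: algebra_simps)
        have q5: "e*(2*a-1) = 2*(e*a) - e" by (simp add: algebra_simps)
        have "(t-1)*c + f \<le> c" using h1 h2 q1 q2 q3 q4 q5 ec by (smt (verit))
        then show ?thesis using h3 f a by linarith
      qed
    qed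
  qed
qed

lemma caseB:
  fixes na nb nc :: nat and a b c e f :: int
  assumes abc: "a = int na" "b = int nb" "c = int nc" and pos: "na > 0" "nb > 0" "nc > 0"
  and e: "e \<ge> 0" and f1: "f > a" and f2: "f \<le> 2*a" and cdef: "c = f*b - e*a" and cop: "coprime a b"
  and ec: "e*(f-1) \<le> c" and hb: "(2*a-f)*b \<le> e*a"
  shows "frob_p 1 [na,nb,nc] = (f-1)*b - a"
proof (rule frob_core[OF abc pos _ cdef cop, where ww = "f - 1 - a"])
  have a: "a > 0" and b: "b > 0" and c: "c > 0" using abc pos by auto
  show "f \<ge> 0" using f1 a by simp
  show "0 \<le> f - 1 - a" "f - 1 - a < a" using f1 f2 by auto
  show "a dvd ((f-1)*b - a - (f-1-a)*b)"
  proof -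
    have "(f-1)*b - a - (f-1-a)*b = a*(b-1)" by (simp add: algebra_simps)
    then show ?thesis by simp
  qed
  fix w :: int assume w: "0 \<le> w" "w < a"
  show "\<exists>y1 z1 y2 z2. 0\<le>y1 \<and> 0\<le>z1 \<and> 0\<le>y2 \<and> 0\<le>z2 \<and> (y1,z1) \<noteq> (y2,z2)
      \<and> a dvd (y1 + z1*f - w) \<and> a dvd (y2 + z2*f - w) \<and> y1*b+z1*c \<le> (f-1)*b \<and> y2*b+z2*c \<le> (f-1)*b"
  proof (cases "w < f - a")
    case True
    show ?thesis
    proof (rule H2_intro[where yA=w and zA=0 and yB="w+a" and zB=0])
      show "w*b + 0*c \<le> (f-1)*b" using mult_right_mono[of w "f-1" b] w b f1 by simp
      show "(w+a)*b + 0*c \<le> (f-1)*b" using mult_right_mono[of "w+a" "f-1" b] w b True by simp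
    qed (use w a in auto)
  next
    case False
    show ?thesis
    proof (rule H2_intro[where yA=w and zA=0 and yB="w+a-f" and zB=1])
      show "w*b + 0*c \<le> (f-1)*b" using mult_right_mono[of w "f-1" b] w b f1 by simp
      have "(w+a-f)*b + 1*c = (w+a)*b - e*a" unfolding cdef by (simp add: algebra_simps)
      also have "\<dots> \<le> (2*a-1)*b - e*a" using mult_right_mono[of "w+a" "2*a-1" b] w b by simp
      also have "\<dots> \<le> (f-1)*b" using hb by (simp add: algebra_simps)
      finally show "(w+a-f)*b + 1*c \<le> (f-1)*b" .
    qed (use w a False in auto)
  qed
next
  have a: "a > 0" and b: "b > 0" and c: "c > 0" using abc pos by auto
  fix t y z :: int
  assume t: "0 \<le> t" and y: "0 \<le> y" and z: "0 \<le> z" and s: "y + z*f = f - 1 - a + t*a"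
    and V: "y*b + z*c \<le> (f-1)*b - a"
  show "y = f - 1 - a \<and> z = 0"
  proof -
    have yv: "y = f - 1 - a + t*a - z*f" using s by simp
    have Veq: "y*b + z*c = (f - 1 - a + t*a)*b - z*e*a" unfolding yv cdef by (simp add: algebra_simps)
    have "a*((t-1)*b + 1) \<le> a*(z*e)" using V Veq by (simp add: algebra_simps)
    then have key2: "(t-1)*b + 1 \<le> z*e" using a by simp
    show ?thesis
    proof (cases "z = 0")
      case True
      have "t < 1"
      proof (rule ccontr)
        assume "\<not> t < 1"
        then have "(t-1)*b \<ge> 0" using b by simp
        then show False using key2 True by simp
      qed
      then show ?thesis using True t yv by simp
    next
      case False
      then have z1: "z \<ge> 1" using z by simp
      have zf: "z*f \<le> f - 1 - a + t*a" using y yv by simp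
      have fz: "1*f \<le> z*f" using z1 f1 a by (intro mult_right_mono) auto
      show ?thesis
      proof (cases "t \<le> 1")
        case True
        then have "t*a \<le> 1*a" using a by (intro mult_right_mono) auto
        then show ?thesis using zf fz by simp
      next
        case False
        have h1: "f*((t-1)*b+1) \<le> f*(z*e)" using key2 f1 a by (intro mult_left_mono) auto
        have h2: "e*(z*f) \<le> e*(f - 1 - a + t*a)" using zf e by (intro mult_left_mono) auto
        have h3: "c \<le> (t-1)*c" using mult_right_mono[of 1 "t-1" c] False c by simp
        have q1: "f*((t-1)*b+1) = (t-1)*c + (t-1)*(e*a) + f" unfolding cdef by (simp add: algebra_simps)
        have q2: "f*(z*e) = e*(z*f)" by (simp add: algebra_simps)
        have q3: "e*(f - 1 - a + t*a) = e*(f-1) - e*a + t*(e*a)" by (simp add: algebra_simps)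
        have q4: "(t-1)*(e*a) = t*(e*a) - e*a" by (simp add: algebra_simps)
        have "(t-1)*c + f \<le> c" using h1 h2 q1 q2 q3 q4 ec by (smt (verit))
        then show ?thesis using h3 f1 a by linarith
      qed
    qed
  qed
qed

lemma caseC:
  fixes na nb nc :: nat and a b c e f :: int
  assumes abc: "a = int na" "b = int nb" "c = int nc" and pos: "na > 0" "nb > 0" "nc > 0"
  and e: "e \<ge> 0" and f1: "f > a" and f2: "f \<le> 2*a - 1" and cdef: "c = f*b - e*a" and cop: "coprime a b"
  and ec: "e*(f-1) \<le> c" and hb: "e*a \<le> (2*a-f)*b"
  shows "frob_p 1 [na,nb,nc] = (2*a-1)*b - e*a - a"
proof (rule frob_core[OF abc pos _ cdef cop, where ww = "a - 1"])
  have a: "a > 0" and b: "b > 0" and c: "c > 0" using abc pos by auto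
  show "f \<ge> 0" using f1 a by simp
  show "0 \<le> a - 1" "a - 1 < a" using a by auto
  show "a dvd ((2*a-1)*b - e*a - a - (a-1)*b)"
  proof -
    have "(2*a-1)*b - e*a - a - (a-1)*b = a*(b-e-1)" by (simp add: algebra_simps)
    then show ?thesis by simp
  qed
  have hb2: "(f-1)*b \<le> (2*a-1)*b - e*a" using hb by (simp add: algebra_simps)
  fix w :: int assume w: "0 \<le> w" "w < a"
  show "\<exists>y1 z1 y2 z2. 0\<le>y1 \<and> 0\<le>z1 \<and> 0\<le>y2 \<and> 0\<le>z2 \<and> (y1,z1) \<noteq> (y2,z2)
      \<and> a dvd (y1 + z1*f - w) \<and> a dvd (y2 + z2*f - w) \<and> y1*b+z1*c \<le> (2*a-1)*b - e*a \<and> y2*b+z2*c \<le> (2*a-1)*b - e*a"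
  proof (cases "w < f - a")
    case True
    show ?thesis
    proof (rule H2_intro[where yA=w and zA=0 and yB="w+a" and zB=0])
      have "w*b \<le> (f-1)*b" by (rule mult_right_mono) (use w f1 b in auto)
      then show "w*b + 0*c \<le> (2*a-1)*b - e*a" using hb2 by simp
      have "(w+a)*b \<le> (f-1)*b" by (rule mult_right_mono) (use w True b in auto)
      then show "(w+a)*b + 0*c \<le> (2*a-1)*b - e*a" using hb2 by simp
    qed (use w a in auto)
  next
    case False
    show ?thesis
    proof (rule H2_intro[where yA=w and zA=0 and yB="w+a-f" and zB=1])
      have "w*b \<le> (f-1)*b" by (rule mult_right_mono) (use w f1 b in auto)
      then show "w*b + 0*c \<le> (2*a-1)*b - e*a" using hb2 by simp
      have "(w+a-f)*b + 1*c = (w+a)*b - e*a" unfolding cdef by (simp add: algebra_simps)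
      also have "\<dots> \<le> (2*a-1)*b - e*a" using mult_right_mono[of "w+a" "2*a-1" b] w b by simp
      finally show "(w+a-f)*b + 1*c \<le> (2*a-1)*b - e*a" .
    qed (use w a False in auto)
  qed
next
  have a: "a > 0" and b: "b > 0" and c: "c > 0" using abc pos by auto
  fix t y z :: int
  assume t: "0 \<le> t" and y: "0 \<le> y" and z: "0 \<le> z" and s: "y + z*f = a - 1 + t*a"
    and V: "y*b + z*c \<le> (2*a-1)*b - e*a - a"
  show "y = a - 1 \<and> z = 0"
  proof -
    have yv: "y = a - 1 + t*a - z*f" using s by simp
    have Veq: "y*b + z*c = (a - 1 + t*a)*b - z*e*a" unfolding yv cdef by (simp add: algebra_simps)
    have "a*((t-1)*b + 1) \<le> a*((z-1)*e)" using V Veq by (simp add: algebra_simps)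
    then have key2: "(t-1)*b + 1 \<le> (z-1)*e" using a by simp
    have zf: "z*f \<le> a - 1 + t*a" using y yv by simp
    show ?thesis
    proof (cases "z = 0")
      case True
      have "t < 1"
      proof (rule ccontr)
        assume "\<not> t < 1"
        then have "(t-1)*b \<ge> 0" using b by simp
        then show False using key2 True e by simp
      qed
      then show ?thesis using True t yv by simp
    next
      case False
      then have z1: "z \<ge> 1" using z by simp
      have fz: "1*f \<le> z*f" using z1 f1 a by (intro mult_right_mono) auto
      show ?thesis
      proof (cases "t = 0")
        case True
        then show ?thesis using zf fz f1 by simp
      next
        case tn0: False
        then have "(t-1)*b \<ge> 0" using t b by simp
        then have "(z-1)*e > 0" using key2 by simp
        then have z2: "z \<ge> 2" using e z1 by (cases "z = 1") auto
        have fz2: "2*f \<le> z*f" using z2 f1 a by (intro mult_right_mono) auto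
        show ?thesis
        proof (cases "t \<le> 1")
          case True
          then have "t*a \<le> 1*a" using a by (intro mult_right_mono) auto
          then show ?thesis using zf fz2 f1 by simp
        next
          case False
          have h1: "f*((t-1)*b+1) \<le> f*((z-1)*e)" using key2 f1 a by (intro mult_left_mono) auto
          have h2: "e*(z*f) \<le> e*(a - 1 + t*a)" using zf e by (intro mult_left_mono) auto
          have h3: "c \<le> (t-1)*c" using mult_right_mono[of 1 "t-1" c] False c by simp
          have h4: "e*(2*a-1-f) \<le> e*(f-1)" using e f1 by (intro mult_left_mono) auto
          have q1: "f*((t-1)*b+1) = (t-1)*c + (t-1)*(e*a) + f" unfolding cdef by (simp add: algebra_simps)
          have q2: "f*((z-1)*e) = e*(z*f) - e*f" by (simp add: algebra_simps)
          have q3: "e*(a - 1 + t*a) = e*a - e + t*(e*a)" by (simp add: algebra_simps)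
          have q4: "(t-1)*(e*a) = t*(e*a) - e*a" by (simp add: algebra_simps)
          have q5: "e*(2*a-1-f) = 2*(e*a) - e - e*f" by (simp add: algebra_simps)
          have "(t-1)*c + f \<le> c" using h1 h2 h4 q1 q2 q3 q4 q5 ec by (smt (verit))
          then show ?thesis using h3 f1 a by linarith
        qed
      qed
    qed
  qed
qed

lemma caseD_H2:
  fixes a b c e f r M w :: int
  assumes a: "a > 0" and b: "b > 0" and c: "c > 0" and e: "e \<ge> 0" and f: "f \<ge> 1"
  and r: "r \<ge> 1" and r1: "r*f \<le> a - 1" and r2: "a - 1 < (r+1)*f"
  and cdef: "c = f*b - e*a" and h2e: "2*e*a \<le> f*b"
  and M1: "(a - r*f - 1)*b + (r+1)*c \<le> M" and M2: "(f-1)*b + r*c \<le> M"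
  and w: "0 \<le> w" "w < a"
  shows "\<exists>y1 z1 y2 z2. 0\<le>y1 \<and> 0\<le>z1 \<and> 0\<le>y2 \<and> 0\<le>z2 \<and> (y1,z1) \<noteq> (y2,z2)
      \<and> a dvd (y1 + z1*f - w) \<and> a dvd (y2 + z2*f - w) \<and> y1*b+z1*c \<le> M \<and> y2*b+z2*c \<le> M"
proof (cases "w < f")
  case wf: True
  have rc: "r*c \<ge> 0" using r c by simp
  have "w*b \<le> (f-1)*b" by (rule mult_right_mono) (use wf b in auto)
  then have V1: "w*b + 0*c \<le> M" using M2 rc by simp
  show ?thesis
  proof (cases "w + a < (r+1)*f")
    case True
    show ?thesis
    proof (rule H2_intro[where yA=w and zA=0 and yB="w+a-r*f" and zB=r])
      have "(w+a-r*f)*b + r*c = (w+a)*b - r*(e*a)" unfolding cdef by (simp add: algebra_simps)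
      also have "\<dots> \<le> ((r+1)*f-1)*b - r*(e*a)"
      proof -
        have "(w+a)*b \<le> ((r+1)*f-1)*b" by (rule mult_right_mono) (use True b in auto)
        then show ?thesis by simp
      qed
      also have "\<dots> = (f-1)*b + r*c" unfolding cdef by (simp add: algebra_simps)
      finally show "(w+a-r*f)*b + r*c \<le> M" using M2 by simp
    qed (use w a r r1 V1 in auto)
  next
    case False
    show ?thesis
    proof (rule H2_intro[where yA=w and zA=0 and yB="w+a-(r+1)*f" and zB="r+1"])
      have "(w+a-(r+1)*f)*b + (r+1)*c = (w+a)*b - (r+1)*(e*a)" unfolding cdef by (simp add: algebra_simps)
      also have "\<dots> \<le> (f-1+a)*b - (r+1)*(e*a)"
      proof -
        have "(w+a)*b \<le> (f-1+a)*b" by (rule mult_right_mono) (use wf b in auto)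
        then show ?thesis by simp
      qed
      also have "\<dots> = (a - r*f - 1)*b + (r+1)*c" unfolding cdef by (simp add: algebra_simps)
      finally show "(w+a-(r+1)*f)*b + (r+1)*c \<le> M" using M1 by simp
    qed (use w a r False V1 in auto)
  qed
next
  case False
  define q where "q = w div f"
  have fpos: "f > 0" using f by simp
  have qf: "q*f \<le> w" "w < (q+1)*f"
  proof -
    have "w = q*f + w mod f" unfolding q_def by simp
    moreover have "0 \<le> w mod f" "w mod f < f" using fpos by auto
    ultimately show "q*f \<le> w" "w < (q+1)*f" by (simp_all add: algebra_simps)
  qed
  have q1: "q \<ge> 1"
  proof (rule ccontr)
    assume "\<not> q \<ge> 1" then have "q + 1 \<le> 1" by simp
    then have "(q+1)*f \<le> 1*f" using fpos by (intro mult_right_mono) auto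
    then show False using qf False by simp
  qed
  have qr: "q \<le> r"
  proof (rule ccontr)
    assume "\<not> q \<le> r" then have "r + 1 \<le> q" by simp
    then have "(r+1)*f \<le> q*f" using fpos by (intro mult_right_mono) auto
    then show False using qf r2 w by simp
  qed
  have ea: "e*a \<ge> 0" using e a by simp
  have Veq: "(w - q*f)*b + q*c = w*b - q*(e*a)" unfolding cdef by (simp add: algebra_simps)
  have Veq2: "(w - (q-1)*f)*b + (q-1)*c = w*b - q*(e*a) + e*a" unfolding cdef by (simp add: algebra_simps)
  have bound: "w*b - q*(e*a) + e*a \<le> M"
  proof (cases "q < r")
    case True
    have "w*b \<le> ((q+1)*f - 1)*b" by (rule mult_right_mono) (use qf b in auto)
    moreover have "((q+1)*f - 1)*b - q*(e*a) + e*a = (f-1)*b + q*c + e*a" unfolding cdef by (simp add: algebra_simps)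
    moreover have "e*a \<le> c" using cdef h2e by (simp add: mult.assoc mult.commute[of a e])
    moreover have "(q+1)*c \<le> r*c" using True c by (intro mult_right_mono) auto
    ultimately show ?thesis using M2 by (simp add: algebra_simps)
  next
    case False
    then have qr': "q = r" using qr by simp
    have "w*b \<le> (a-1)*b" by (rule mult_right_mono) (use w b in auto)
    moreover have "(a - r*f - 1)*b + (r+1)*c = (a-1)*b - r*(e*a) - e*a + f*b" unfolding cdef by (simp add: algebra_simps)
    moreover have "2*(e*a) \<le> f*b" using h2e by (simp add: mult.assoc)
    ultimately show ?thesis using M1 unfolding qr' by linarith
  qed
  show ?thesis
  proof (rule H2_intro[where yA="w - q*f" and zA=q and yB="w - (q-1)*f" and zB="q-1"])
    show "(w - q*f)*b + q*c \<le> M" using Veq bound ea by simp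
    show "(w - (q-1)*f)*b + (q-1)*c \<le> M" using Veq2 bound by simp
    show "0 \<le> w - (q-1)*f" using qf fpos by (simp add: algebra_simps)
  qed (use qf q1 in auto)
qed

lemma caseD1:
  fixes na nb nc :: nat and a b c e f r :: int
  assumes abc: "a = int na" "b = int nb" "c = int nc" and pos: "na > 0" "nb > 0" "nc > 0"
  and e: "e \<ge> 0" and f: "f \<ge> 1"
  and r: "r \<ge> 1" and r1: "r*f \<le> a - 1" and r2: "a - 1 < (r+1)*f"
  and cdef: "c = f*b - e*a" and h2e: "2*e*a \<le> f*b" and cop: "coprime a b"
  and ec: "e*(f-1) \<le> c" and cond: "(a - r*f)*b \<ge> e*a"
  shows "frob_p 1 [na,nb,nc] = (a - r*f - 1)*b + (r+1)*c - a"
proof (rule frob_core[OF abc pos _ cdef cop, where ww = "f - 1"])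
  have a: "a > 0" and b: "b > 0" and c: "c > 0" using abc pos by auto
  have fr: "1*f \<le> r*f" using r f by (intro mult_right_mono) auto
  show "f \<ge> 0" using f by simp
  show "0 \<le> f - 1" "f - 1 < a" using f fr r1 by linarith+
  show "a dvd ((a - r*f - 1)*b + (r+1)*c - a - (f-1)*b)"
  proof -
    have "(a - r*f - 1)*b + (r+1)*c - a - (f-1)*b = a*(b - (r+1)*e - 1)" unfolding cdef by (simp add: algebra_simps)
    then show ?thesis by simp
  qed
  fix w :: int assume w: "0 \<le> w" "w < a"
  have M2: "(f-1)*b + r*c \<le> (a - r*f - 1)*b + (r+1)*c"
  proof -
    have "(a - r*f - 1)*b + (r+1)*c - ((f-1)*b + r*c) = (a - r*f)*b - e*a" unfolding cdef by (simp add: algebra_simps)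
    then show ?thesis using cond by simp
  qed
  show "\<exists>y1 z1 y2 z2. 0\<le>y1 \<and> 0\<le>z1 \<and> 0\<le>y2 \<and> 0\<le>z2 \<and> (y1,z1) \<noteq> (y2,z2)
      \<and> a dvd (y1 + z1*f - w) \<and> a dvd (y2 + z2*f - w) \<and> y1*b+z1*c \<le> (a - r*f - 1)*b + (r+1)*c \<and> y2*b+z2*c \<le> (a - r*f - 1)*b + (r+1)*c"
    by (rule caseD_H2[OF a b c e f r r1 r2 cdef h2e _ M2 w]) simp
next
  have a: "a > 0" and b: "b > 0" and c: "c > 0" using abc pos by auto
  fix t y z :: int
  assume t: "0 \<le> t" and y: "0 \<le> y" and z: "0 \<le> z" and s: "y + z*f = f - 1 + t*a"
    and V: "y*b + z*c \<le> (a - r*f - 1)*b + (r+1)*c - a"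
  show "y = f - 1 \<and> z = 0"
  proof -
    have yv: "y = f - 1 + t*a - z*f" using s by simp
    have Veq: "y*b + z*c = (f - 1 + t*a)*b - z*e*a" unfolding yv cdef by (simp add: algebra_simps)
    have Peq: "(a - r*f - 1)*b + (r+1)*c - a = (f - 1 + a)*b - (r+1)*e*a - a" unfolding cdef by (simp add: algebra_simps)
    have "a*((t-1)*b + 1) \<le> a*((z-r-1)*e)" using V Veq Peq by (simp add: algebra_simps)
    then have key2: "(t-1)*b + 1 \<le> (z-r-1)*e" using a by simp
    have zf: "z*f \<le> f - 1 + t*a" using y yv by simp
    show ?thesis
    proof (cases "t = 0")
      case True
      have "z = 0"
      proof (rule ccontr)
        assume "z \<noteq> 0" then have "1*f \<le> z*f" using z f by (intro mult_right_mono) auto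
        then show False using zf True by simp
      qed
      then show ?thesis using True yv by simp
    next
      case tn0: False
      show ?thesis
      proof (cases "t = 1")
        case True
        then have "(z-r-1)*e \<ge> 1" using key2 by simp
        then have "z - r - 1 > 0" using e by (metis mult_nonpos_nonneg not_le zero_less_one order_less_le_trans)
        then have "r + 2 \<le> z" by simp
        then have "(r+2)*f \<le> z*f" using f by (intro mult_right_mono) auto
        then show ?thesis using zf True r2 by (simp add: algebra_simps)
      next
        case False
        then have t2: "t \<ge> 2" using tn0 t by simp
        have h1: "f*((t-1)*b+1) \<le> f*((z-r-1)*e)" using key2 f by (intro mult_left_mono) auto
        have h2: "e*(z*f) \<le> e*(f - 1 + t*a)" using zf e by (intro mult_left_mono) auto
        have h3: "c \<le> (t-1)*c" using mult_right_mono[of 1 "t-1" c] t2 c by simp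
        have h4: "e*(a - 1 - r*f) \<le> e*(f-1)" using e r2 by (intro mult_left_mono) (auto simp: algebra_simps)
        have q1: "f*((t-1)*b+1) = (t-1)*c + (t-1)*(e*a) + f" unfolding cdef by (simp add: algebra_simps)
        have q2: "f*((z-r-1)*e) = e*(z*f) - (r+1)*(e*f)" by (simp add: algebra_simps)
        have q3: "e*(f - 1 + t*a) = e*f - e + t*(e*a)" by (simp add: algebra_simps)
        have q4: "(t-1)*(e*a) = t*(e*a) - e*a" by (simp add: algebra_simps)
        have q5: "e*(a - 1 - r*f) = e*a - e - r*(e*f)" by (simp add: algebra_simps)
        have q6: "(r+1)*(e*f) = r*(e*f) + e*f" by (simp add: algebra_simps)
        have "(t-1)*c + f \<le> c" using h1 h2 h4 q1 q2 q3 q4 q5 q6 ec by (smt (verit))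
        then show ?thesis using h3 f by linarith
      qed
    qed
  qed
qed

lemma caseD2:
  fixes na nb nc :: nat and a b c e f r :: int
  assumes abc: "a = int na" "b = int nb" "c = int nc" and pos: "na > 0" "nb > 0" "nc > 0"
  and e: "e \<ge> 0" and f: "f \<ge> 1"
  and r: "r \<ge> 1" and r1: "r*f \<le> a - 1" and r2: "a - 1 < (r+1)*f"
  and cdef: "c = f*b - e*a" and h2e: "2*e*a \<le> f*b" and cop: "coprime a b"
  and ec: "e*(f-1) \<le> c" and cond: "\<not> (a - r*f)*b \<ge> e*a"
  shows "frob_p 1 [na,nb,nc] = (f-1)*b + r*c - a"
proof (rule frob_core[OF abc pos _ cdef cop, where ww = "(r+1)*f - 1 - a"])
  have a: "a > 0" and b: "b > 0" and c: "c > 0" using abc pos by auto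
  have fr: "1*f \<le> r*f" using r f by (intro mult_right_mono) auto
  show "f \<ge> 0" using f by simp
  have "(r+1)*f \<noteq> a"
  proof
    assume h: "(r+1)*f = a"
    then have "a - r*f = f" by (simp add: algebra_simps)
    then have "f*b < e*a" using cond by simp
    moreover have "e*a \<ge> 0" using e a by simp
    ultimately show False using h2e by (simp add: mult.assoc)
  qed
  then show "0 \<le> (r+1)*f - 1 - a" using r2 by simp
  have "(r+1)*f = r*f + f" by (simp add: algebra_simps)
  then show "(r+1)*f - 1 - a < a" using fr r1 by linarith
  show "a dvd ((f-1)*b + r*c - a - ((r+1)*f - 1 - a)*b)"
  proof -
    have "(f-1)*b + r*c - a - ((r+1)*f - 1 - a)*b = a*(b - r*e - 1)" unfolding cdef by (simp add: algebra_simps)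
    then show ?thesis by simp
  qed
  fix w :: int assume w: "0 \<le> w" "w < a"
  have M1: "(a - r*f - 1)*b + (r+1)*c \<le> (f-1)*b + r*c"
  proof -
    have "(a - r*f - 1)*b + (r+1)*c - ((f-1)*b + r*c) = (a - r*f)*b - e*a" unfolding cdef by (simp add: algebra_simps)
    then show ?thesis using cond by simp
  qed
  show "\<exists>y1 z1 y2 z2. 0\<le>y1 \<and> 0\<le>z1 \<and> 0\<le>y2 \<and> 0\<le>z2 \<and> (y1,z1) \<noteq> (y2,z2)
      \<and> a dvd (y1 + z1*f - w) \<and> a dvd (y2 + z2*f - w) \<and> y1*b+z1*c \<le> (f-1)*b + r*c \<and> y2*b+z2*c \<le> (f-1)*b + r*c"
    by (rule caseD_H2[OF a b c e f r r1 r2 cdef h2e M1 _ w]) simp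
next
  have a: "a > 0" and b: "b > 0" and c: "c > 0" using abc pos by auto
  fix t y z :: int
  assume t: "0 \<le> t" and y: "0 \<le> y" and z: "0 \<le> z" and s: "y + z*f = (r+1)*f - 1 - a + t*a"
    and V: "y*b + z*c \<le> (f-1)*b + r*c - a"
  show "y = (r+1)*f - 1 - a \<and> z = 0"
  proof -
    have yv: "y = (r+1)*f - 1 - a + t*a - z*f" using s by simp
    have Veq: "y*b + z*c = ((r+1)*f - 1 - a + t*a)*b - z*e*a" unfolding yv cdef by (simp add: algebra_simps)
    have Peq: "(f-1)*b + r*c - a = ((r+1)*f - 1)*b - r*e*a - a" unfolding cdef by (simp add: algebra_simps)
    have "a*((t-1)*b + 1) \<le> a*((z-r)*e)" using V Veq Peq by (simp add: algebra_simps)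
    then have key2: "(t-1)*b + 1 \<le> (z-r)*e" using a by simp
    have zf: "z*f \<le> (r+1)*f - 1 - a + t*a" using y yv by simp
    show ?thesis
    proof (cases "t = 0")
      case True
      have "z = 0"
      proof (rule ccontr)
        assume "z \<noteq> 0" then have "1*f \<le> z*f" using z f by (intro mult_right_mono) auto
        then show False using zf True r1 by (simp add: algebra_simps)
      qed
      then show ?thesis using True yv by simp
    next
      case tn0: False
      show ?thesis
      proof (cases "t = 1")
        case True
        then have "(z-r)*e \<ge> 1" using key2 by simp
        then have "z - r > 0" using e by (metis mult_nonpos_nonneg not_le zero_less_one order_less_le_trans)
        then have "r + 1 \<le> z" by simp
        then have "(r+1)*f \<le> z*f" using f by (intro mult_right_mono) auto
        then show ?thesis using zf True by (simp add: algebra_simps)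
      next
        case False
        then have t2: "t \<ge> 2" using tn0 t by simp
        have h1: "f*((t-1)*b+1) \<le> f*((z-r)*e)" using key2 f by (intro mult_left_mono) auto
        have h2: "e*(z*f) \<le> e*((r+1)*f - 1 - a + t*a)" using zf e by (intro mult_left_mono) auto
        have h3: "c \<le> (t-1)*c" using mult_right_mono[of 1 "t-1" c] t2 c by simp
        have q1: "f*((t-1)*b+1) = (t-1)*c + (t-1)*(e*a) + f" unfolding cdef by (simp add: algebra_simps)
        have q2: "f*((z-r)*e) = e*(z*f) - r*(e*f)" by (simp add: algebra_simps)
        have q3: "e*((r+1)*f - 1 - a + t*a) = r*(e*f) + e*(f-1) - e*a + t*(e*a)" by (simp add: algebra_simps)
        have q4: "(t-1)*(e*a) = t*(e*a) - e*a" by (simp add: algebra_simps)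
        have "(t-1)*c + f \<le> c" using h1 h2 q1 q2 q3 q4 ec by (smt (verit))
        then show ?thesis using h3 f by linarith
      qed
    qed
  qed
qed

lemma lucas_fib: "lucas (Suc n) = fib n + fib (n+2)"
proof (induction n rule: fib.induct)
  case 1 then show ?case by simp
next
  case 2 then show ?case by (simp add: numeral_2_eq_2)
next
  case (3 n)
  have "lucas (Suc (Suc (Suc n))) = lucas (Suc (Suc n)) + lucas (Suc n)" by simp
  also have "\<dots> = fib (Suc n) + fib (Suc n + 2) + (fib n + fib (n+2))" using 3 by simp
  also have "\<dots> = fib (Suc (Suc n)) + fib (Suc (Suc n) + 2)" by (simp add: numeral_2_eq_2)
  finally show ?case .
qed

lemma lucas_add: "lucas (n + Suc k) = fib (Suc k) * lucas (Suc n) + fib k * lucas n"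
proof (induction k rule: fib.induct)
  case 1 then show ?case by simp
next
  case 2 then show ?case by simp
next
  case (3 k)
  have "lucas (n + Suc (Suc (Suc k))) = lucas (n + Suc (Suc k)) + lucas (n + Suc k)"
    by (simp add: add.commute)
  also have "\<dots> = fib (Suc (Suc (Suc k))) * lucas (Suc n) + fib (Suc (Suc k)) * lucas n"
    using 3 by (simp add: algebra_simps)
  finally show ?case .
qed

lemma lucas_pos: "lucas n > 0"
  by (induction n rule: fib.induct) auto

lemma coprime_lucas_Suc: "coprime (lucas n) (lucas (Suc n))"
proof (induction n)
  case 0 then show ?case by simp
next
  case (Suc n)
  have "gcd (lucas (Suc n)) (lucas (Suc (Suc n))) = gcd (lucas (Suc n)) (lucas (Suc n) + lucas n)" by simp
  also have "\<dots> = gcd (lucas (Suc n)) (lucas n)" by (rule gcd_add2)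
  also have "\<dots> = 1" using Suc by (simp add: gcd.commute coprime_iff_gcd_eq_1)
  finally show ?case by (simp add: coprime_iff_gcd_eq_1)
qed

lemma coprime_lucas2: "coprime (int (lucas i)) (int (lucas (i+2)))"
proof -
  have "gcd (lucas i) (lucas (i+2)) = gcd (lucas i) (lucas i + lucas (Suc i))"
    by (simp add: numeral_2_eq_2 add.commute)
  also have "\<dots> = gcd (lucas i) (lucas (Suc i))" by (rule gcd_add2)
  also have "\<dots> = 1" using coprime_lucas_Suc[of i] by (simp add: coprime_iff_gcd_eq_1)
  finally have g: "gcd (lucas i) (lucas (i+2)) = 1" .
  then have "coprime (lucas i) (lucas (i+2))" by (simp only: coprime_iff_gcd_eq_1)
  then show ?thesis by (simp only: coprime_int_iff)
qed

lemma lucas_c: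
  assumes "k \<ge> 2"
  shows "int (lucas (i + k)) = int (fib k) * int (lucas (i+2)) - int (fib (k-2)) * int (lucas i)"
proof -
  obtain m where m: "k = Suc (Suc m)" using assms by (metis add_2_eq_Suc le_Suc_ex)
  have "lucas (i + k) = fib k * lucas (Suc i) + fib (Suc m) * lucas i"
    using lucas_add[of i "Suc m"] m by simp
  moreover have "lucas (i+2) = lucas (Suc i) + lucas i" by (simp add: numeral_2_eq_2)
  moreover have "fib k = fib (Suc m) + fib m" using m by simp
  moreover have "k - 2 = m" using m by simp
  ultimately show ?thesis by (simp add: algebra_simps)
qed

lemma fib_2e: "k \<ge> 2 \<Longrightarrow> 2 * fib (k-2) \<le> fib k"
proof -
  assume "k \<ge> 2"
  then obtain m where m: "k = Suc (Suc m)" by (metis add_2_eq_Suc le_Suc_ex)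
  have "fib m \<le> fib (Suc m)" by (rule fib_Suc_mono)
  then show ?thesis using m by simp
qed

theorem theorem6:
  fixes i k :: nat
  assumes hi: "i \<ge> 3" and hk: "k \<ge> 3"
  defines "Li \<equiv> int (lucas i)" and "Li2 \<equiv> int (lucas (i + 2))"
      and "Lik \<equiv> int (lucas (i + k))"
  shows
   "(k \<ge> i + 4 \<longrightarrow>
       frob_p 1 [lucas i, lucas (i + 2), lucas (i + k)] = (2 * Li - 1) * Li2 - Li)
    \<and> frob_p 1 [lucas i, lucas (i + 2), lucas (2 * i + 3)]
        = (int (fib (i + 3)) - 1) * Li2 - Li
    \<and> frob_p 1 [lucas i, lucas (i + 2), lucas (2 * i + 2)]
        = (3 * int (fib (i - 1)) - 1) * Li2 + int (lucas (2 * i + 2)) - Li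
    \<and> (let r = (lucas i - 1) div fib k in
        r \<ge> 1 \<longrightarrow>
        frob_p 1 [lucas i, lucas (i + 2), lucas (i + k)] =
          (if (Li - int r * int (fib k)) * Li2 \<ge> int (fib (k - 2)) * Li
           then (Li - int r * int (fib k) - 1) * Li2 + (int r + 1) * Lik - Li
           else (int (fib k) - 1) * Li2 + int r * Lik - Li))"
proof -
  obtain m where i: "i = m + 3" using hi by (metis add.commute le_iff_add)
  define u where "u = int (fib m)"
  define v where "v = int (fib (Suc m))"
  have u0: "0 \<le> u" unfolding u_def by simp
  have uv: "u \<le> v" unfolding u_def v_def using fib_Suc_mono[of m] by simp
  have v1: "1 \<le> v" unfolding v_def using fib_neq_0_nat[of "Suc m"] by simp
  have F2: "int (fib (m+2)) = u + v" unfolding u_def v_def by (simp add: eval_nat_numeral)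
  have F3: "int (fib (m+3)) = u + 2*v" unfolding u_def v_def by (simp add: eval_nat_numeral)
  have F4: "int (fib (m+4)) = 2*u + 3*v" unfolding u_def v_def by (simp add: eval_nat_numeral)
  have F5: "int (fib (m+5)) = 3*u + 5*v" unfolding u_def v_def by (simp add: eval_nat_numeral)
  have F6: "int (fib (m+6)) = 5*u + 8*v" unfolding u_def v_def by (simp add: eval_nat_numeral)
  have F7: "int (fib (m+7)) = 8*u + 13*v" unfolding u_def v_def by (simp add: eval_nat_numeral)
  have La: "Li = 3*u + 4*v"
  proof -
    have "lucas i = fib (m+2) + fib (m+4)" using lucas_fib[of "m+2"] i by (simp add: eval_nat_numeral)
    then show ?thesis unfolding Li_def using F2 F4 by simp
  qed
  have Lb: "Li2 = 7*u + 11*v"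
  proof -
    have "lucas (i+2) = fib (m+4) + fib (m+6)" using lucas_fib[of "m+4"] i by (simp add: eval_nat_numeral)
    then show ?thesis unfolding Li2_def using F4 F6 by simp
  qed
  have cop: "coprime Li Li2" unfolding Li_def Li2_def by (rule coprime_lucas2)
  have pa: "lucas i > 0" "lucas (i+2) > 0" by (rule lucas_pos)+
  have Li0: "Li > 0" and Li20: "Li2 > 0" using pa unfolding Li_def Li2_def by auto
  have b2a: "2*Li \<le> Li2" using La Lb u0 v1 by simp
  show ?thesis
  proof (intro conjI)
    show "k \<ge> i + 4 \<longrightarrow> frob_p 1 [lucas i, lucas (i + 2), lucas (i + k)] = (2 * Li - 1) * Li2 - Li"
    proof
      assume hk4: "k \<ge> i + 4"
      define e where "e = int (fib (k-2))"
      define f where "f = int (fib k)"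
      have cdef: "Lik = f*Li2 - e*Li" unfolding Lik_def Li_def Li2_def e_def f_def
        using lucas_c[of k i] hk by simp
      have e0: "e \<ge> 0" unfolding e_def by simp
      have "fib (m+7) \<le> fib k" using hk4 i by (intro fib_mono) simp
      then have "f \<ge> 8*u + 13*v" unfolding f_def using F7 by linarith
      then have f2a: "f \<ge> 2*Li" using La u0 v1 by simp
      have fe: "2*e \<le> f" unfolding e_def f_def using fib_2e[of k] hk by simp
      have "(2*e)*(2*Li) \<le> f*Li2" using fe b2a e0 Li0 by (intro mult_mono) auto
      moreover have "(2*e)*(2*Li) = 4*(e*Li)" by (simp add: algebra_simps)
      moreover have "e*(2*Li-1) = 2*(e*Li) - e" by (simp add: algebra_simps)
      moreover have "e*Li \<ge> 0" using e0 Li0 by simp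
      ultimately have ec: "e*(2*Li-1) \<le> Lik" unfolding cdef using e0 by linarith
      have pc: "lucas (i+k) > 0" by (rule lucas_pos)
      show "frob_p 1 [lucas i, lucas (i + 2), lucas (i + k)] = (2 * Li - 1) * Li2 - Li"
        by (rule caseA[OF Li_def[THEN meta_eq_to_obj_eq] Li2_def[THEN meta_eq_to_obj_eq]
              Lik_def[THEN meta_eq_to_obj_eq] pa pc e0 f2a cdef cop ec])
    qed
    have uu: "u*u \<le> u*v" using uv u0 by (intro mult_left_mono) auto
    have uv0: "u*v \<ge> 0" using u0 v1 by simp
    have vv0: "v*v \<ge> 0" by simp
    have uu0: "u*u \<ge> 0" by simp
    show "frob_p 1 [lucas i, lucas (i + 2), lucas (2 * i + 3)] = (int (fib (i + 3)) - 1) * Li2 - Li"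
    proof -
      define e where "e = int (fib (i+1))"
      define f where "f = int (fib (i+3))"
      define c where "c = int (lucas (2*i+3))"
      have i3: "2*i+3 = i + (i+3)" by simp
      have cdef: "c = f*Li2 - e*Li" unfolding c_def Li_def Li2_def e_def f_def i3
        using lucas_c[of "i+3" i] by simp
      have ii1: "i + 3 = m + 6" using i by simp
      have fe: "f = 5*u + 8*v" unfolding f_def ii1 using F6 .
      have ii2: "i + 1 = m + 4" using i by simp
      have ee: "e = 2*u + 3*v" unfolding e_def ii2 using F4 .
      have e0: "e \<ge> 0" unfolding e_def by simp
      have f1: "f > Li" using fe La v1 u0 by simp
      have f2: "f \<le> 2*Li" using fe La v1 u0 by simp
      have hbq: "(2*Li - f)*Li2 = 7*(u*u) + 11*(u*v)" unfolding fe La Lb by algebra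
      have eaq: "e*Li = 6*(u*u) + 17*(u*v) + 12*(v*v)" unfolding ee La by algebra
      have efq: "e*f = 10*(u*u) + 31*(u*v) + 24*(v*v)" unfolding ee fe by algebra
      have fbq: "f*Li2 = 35*(u*u) + 111*(u*v) + 88*(v*v)" unfolding fe Lb by algebra
      have hb: "(2*Li - f)*Li2 \<le> e*Li" using hbq eaq uu uv0 vv0 uu0 by linarith
      have "e*(f-1) = e*f - e" by (simp add: algebra_simps)
      then have ec: "e*(f-1) \<le> c" unfolding cdef using efq eaq fbq uu uv0 vv0 uu0 e0 by linarith
      have pc: "lucas (2*i+3) > 0" by (rule lucas_pos)
      have "frob_p 1 [lucas i, lucas (i + 2), lucas (2 * i + 3)] = (f-1)*Li2 - Li"
        by (rule caseB[OF Li_def[THEN meta_eq_to_obj_eq] Li2_def[THEN meta_eq_to_obj_eq]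
              c_def pa pc e0 f1 f2 cdef cop ec hb])
      then show ?thesis unfolding f_def .
    qed
    show "frob_p 1 [lucas i, lucas (i + 2), lucas (2 * i + 2)]
        = (3 * int (fib (i - 1)) - 1) * Li2 + int (lucas (2 * i + 2)) - Li"
    proof -
      define e where "e = int (fib i)"
      define f where "f = int (fib (i+2))"
      define c where "c = int (lucas (2*i+2))"
      have i2: "2*i+2 = i + (i+2)" by simp
      have cdef: "c = f*Li2 - e*Li" unfolding c_def Li_def Li2_def e_def f_def i2
        using lucas_c[of "i+2" i] by simp
      have ii1: "i + 2 = m + 5" using i by simp
      have fe: "f = 3*u + 5*v" unfolding f_def ii1 using F5 .
      have ee: "e = u + 2*v" unfolding e_def i using F3 .
      have ii3: "i - 1 = m + 2" using i by simp
      have fm: "int (fib (i-1)) = u + v" unfolding ii3 using F2 .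
      have e0: "e \<ge> 0" unfolding e_def by simp
      have f1: "f > Li" using fe La v1 u0 by simp
      have f2: "f \<le> 2*Li - 1" using fe La v1 u0 by simp
      have hbq: "(2*Li - f)*Li2 = 21*(u*u) + 54*(u*v) + 33*(v*v)" unfolding fe La Lb by algebra
      have eaq: "e*Li = 3*(u*u) + 10*(u*v) + 8*(v*v)" unfolding ee La by algebra
      have efq: "e*f = 3*(u*u) + 11*(u*v) + 10*(v*v)" unfolding ee fe by algebra
      have fbq: "f*Li2 = 21*(u*u) + 68*(u*v) + 55*(v*v)" unfolding fe Lb by algebra
      have hb: "e*Li \<le> (2*Li - f)*Li2" using hbq eaq uu uv0 vv0 uu0 by linarith
      have "e*(f-1) = e*f - e" by (simp add: algebra_simps)
      then have ec: "e*(f-1) \<le> c" unfolding cdef using efq eaq fbq uu uv0 vv0 uu0 e0 by linarith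
      have pc: "lucas (2*i+2) > 0" by (rule lucas_pos)
      have "frob_p 1 [lucas i, lucas (i + 2), lucas (2 * i + 2)] = (2*Li-1)*Li2 - e*Li - Li"
        by (rule caseC[OF Li_def[THEN meta_eq_to_obj_eq] Li2_def[THEN meta_eq_to_obj_eq]
              c_def pa pc e0 f1 f2 cdef cop ec hb])
      also have "\<dots> = (3 * int (fib (i - 1)) - 1) * Li2 + c - Li"
        unfolding fm cdef fe La by algebra
      finally show ?thesis unfolding c_def .
    qed
    show "let r = (lucas i - 1) div fib k in
        r \<ge> 1 \<longrightarrow>
        frob_p 1 [lucas i, lucas (i + 2), lucas (i + k)] =
          (if (Li - int r * int (fib k)) * Li2 \<ge> int (fib (k - 2)) * Li
           then (Li - int r * int (fib k) - 1) * Li2 + (int r + 1) * Lik - Li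
           else (int (fib k) - 1) * Li2 + int r * Lik - Li)"
      unfolding Let_def
    proof (intro impI)
      define rn where "rn = (lucas i - 1) div fib k"
      assume "1 \<le> (lucas i - 1) div fib k"
      then have rn1: "1 \<le> rn" unfolding rn_def .
      define r where "r = int rn"
      define e where "e = int (fib (k-2))"
      define f where "f = int (fib k)"
      have fk: "fib k > 0" using hk by (intro fib_neq_0_nat) simp
      have n1: "rn * fib k \<le> lucas i - 1" unfolding rn_def by simp
      have n2: "lucas i - 1 < fib k + rn * fib k" unfolding rn_def using fk by (rule dividend_less_div_times)
      have Lm1: "int (lucas i - 1) = Li - 1" unfolding Li_def using pa by simp
      have r1: "r*f \<le> Li - 1" using n1 Lm1 unfolding r_def f_def
        by (metis of_nat_le_iff of_nat_mult)
      have r2: "Li - 1 < (r+1)*f"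
      proof -
        have "int (lucas i - 1) < int (fib k + rn * fib k)" using n2 by linarith
        then show ?thesis using Lm1 unfolding r_def f_def by (simp add: algebra_simps)
      qed
      have r0: "r \<ge> 1" unfolding r_def using rn1 by simp
      have f1: "f \<ge> 1" unfolding f_def using fk by simp
      have e0: "e \<ge> 0" unfolding e_def by simp
      have cdef: "Lik = f*Li2 - e*Li" unfolding Lik_def Li_def Li2_def e_def f_def
        using lucas_c[of k i] hk by simp
      have fe: "2*e \<le> f" unfolding e_def f_def using fib_2e[of k] hk by simp
      have h2e: "2*e*Li \<le> f*Li2" using fe b2a e0 Li0 f1 by (intro mult_mono) auto
      have fr: "1*f \<le> r*f" using r0 f1 by (intro mult_right_mono) auto
      have fa: "f \<le> Li - 1" using fr r1 by linarith
      have A1: "(2*e)*(f-1) \<le> f*(f-1)" using fe f1 by (intro mult_right_mono) auto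
      have A2: "(2*e)*Li \<le> f*Li" using fe Li0 by (intro mult_right_mono) auto
      have A3: "f*(f-1) \<le> f*Li" using fa f1 by (intro mult_left_mono) auto
      have A4: "f*(2*Li) \<le> f*Li2" using b2a f1 by (intro mult_left_mono) auto
      have q1: "(2*e)*(f-1) = 2*(e*(f-1))" "(2*e)*Li = 2*(e*Li)" "f*(2*Li) = 2*(f*Li)" by (simp_all add: algebra_simps)
      have fb0: "f*Li2 \<ge> 0" using f1 Li20 by simp
      have ec: "e*(f-1) \<le> Lik" unfolding cdef using A1 A2 A3 A4 q1 fb0 by linarith
      have pc: "lucas (i+k) > 0" by (rule lucas_pos)
      show "frob_p 1 [lucas i, lucas (i + 2), lucas (i + k)] =
          (if (Li - int rn * int (fib k)) * Li2 \<ge> int (fib (k - 2)) * Li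
           then (Li - int rn * int (fib k) - 1) * Li2 + (int rn + 1) * Lik - Li
           else (int (fib k) - 1) * Li2 + int rn * Lik - Li)"
      proof (cases "(Li - r*f)*Li2 \<ge> e*Li")
        case True
        then show ?thesis using caseD1[OF Li_def[THEN meta_eq_to_obj_eq] Li2_def[THEN meta_eq_to_obj_eq]
              Lik_def[THEN meta_eq_to_obj_eq] pa pc e0 f1 r0 r1 r2 cdef h2e cop ec True]
          unfolding r_def f_def e_def by simp
      next
        case False
        then show ?thesis using caseD2[OF Li_def[THEN meta_eq_to_obj_eq] Li2_def[THEN meta_eq_to_obj_eq]
              Lik_def[THEN meta_eq_to_obj_eq] pa pc e0 f1 r0 r1 r2 cdef h2e cop ec False]
          unfolding r_def f_def e_def by simp
      qed
    qed
  qed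
qed

end
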